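(* Consider a sample path of the CTAS sampling rule (run without stopping). For every $\varepsilon>0$, if there exists $t_0$ such that $\max_a|\hat w^*_a(t)-w^*_a|<\varepsilon$ for all $t\ge t_0$, then there exists $t_\varepsilon\ge t_0$ such that for all $t\ge t_\varepsilon$ and all arms $a$, \[ \left|\frac{\hat c_a(t)N_a(t)}{J(t)}-w^*_a\right|\le3(K-1)\varepsilon. \]
   Context: Setting: $K$ arms; arm $a$ has reward distribution in a one-parameter natural exponential family parametrized by the mean $\mu_a$ and cost distribution of mean $c_a$ supported in $[\ell,1]$, $\ell>0$; the best arm is unique. $N_a(t)$: number of pulls of $a$ up to $t$; $\hat\mu_a(t),\hat c_a(t)$: empirical mean reward and cost; $J(t)=\sum_{k\le t}C_k$ with $C_k$ the cost observed at round $k$. $d$ is the KL divergence within the family. For reward means $\boldsymbol{\mu}'$ with unique best arm and positive cost means $\boldsymbol{c}'$, $\boldsymbol{w}^*(\boldsymbol{\mu}',\boldsymbol{c}')$ is the maximizer over the simplex of $\inf_{\boldsymbol{\lambda}:a^*(\boldsymbol{\lambda})\ne a^*(\boldsymbol{\mu}')}\sum_a\frac{w_a}{c'_a}d(\mu'_a,\lambda_a)$; $\boldsymbol{w}^*=\boldsymbol{w}^*(\boldsymbol{\mu},\boldsymbol{c})$ and $\hat{\boldsymbol{w}}^*(t)=\boldsymbol{w}^*(\hat{\boldsymbol{\mu}}(t),\hat{\boldsymbol{c}}(t))$. CTAS sampling rule: pull each arm once; then at each time $t$, with $\mathcal{U}_t=\{a:N_a(t)<\sqrt t\}$, pull an arm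 in $\arg\min_aN_a(t)$ if $\mathcal{U}_t\neq\emptyset$, and otherwise an arm in $\arg\max_a(J(t)\hat w^*_a(t)-\hat c_a(t)N_a(t))$. *)

theory Defs
  imports "HOL-Analysis.Analysis"
begin

text \<open>Arms are 0,...,K-1. Rounds are numbered 1,2,3,...; A k is the arm pulled at
 round k, X k the reward and C k the cost observed at round k.\<close>

definition prob_simplex :: "nat \<Rightarrow> (nat \<Rightarrow> real) set" where
  "prob_simplex K = {w. (\<forall>a<K. 0 \<le> w a) \<and> (\<Sum>a<K. w a) = 1}"

definition is_best :: "nat \<Rightarrow> (nat \<Rightarrow> real) \<Rightarrow> nat \<Rightarrow> bool" where
  "is_best K m a \<longleftrightarrow> a < K \<and> (\<forall>b<K. b \<noteq> a \<longrightarrow> m b < m a)"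

definition best_arm :: "nat \<Rightarrow> (nat \<Rightarrow> real) \<Rightarrow> nat" where
  "best_arm K m = (SOME a. is_best K m a)"

definition alt :: "nat \<Rightarrow> (nat \<Rightarrow> real) \<Rightarrow> (nat \<Rightarrow> real) set" where
  "alt K m = {l. \<not> is_best K l (best_arm K m)}"

text \<open>d is the KL divergence of the exponential family\<close>
definition objective ::
  "(real \<Rightarrow> real \<Rightarrow> real) \<Rightarrow> nat \<Rightarrow> (nat \<Rightarrow> real) \<Rightarrow> (nat \<Rightarrow> real) \<Rightarrow> (nat \<Rightarrow> real) \<Rightarrow> real" where
  "objective d K m c w = (INF l\<in>alt K m. \<Sum>a<K. w a / c a * d (m a) (l a))"

definition is_opt_alloc ::
  "(real \<Rightarrow> real \<Rightarrow> real) \<Rightarrow> nat \<Rightarrow> (nat \<Rightarrow> real) \<Rightarrow> (nat \<Rightarrow> real) \<Rightarrow> (nat \<Rightarrow> real) \<Rightarrow> bool" where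
  "is_opt_alloc d K m c w \<longleftrightarrow> w \<in> prob_simplex K \<and> (\<forall>v\<in>prob_simplex K. objective d K m c v \<le> objective d K m c w)"

definition wstar ::
  "(real \<Rightarrow> real \<Rightarrow> real) \<Rightarrow> nat \<Rightarrow> (nat \<Rightarrow> real) \<Rightarrow> (nat \<Rightarrow> real) \<Rightarrow> (nat \<Rightarrow> real)" where
  "wstar d K m c = (SOME w. is_opt_alloc d K m c w)"

definition Npulls :: "(nat \<Rightarrow> nat) \<Rightarrow> nat \<Rightarrow> nat \<Rightarrow> nat" where
  "Npulls A a t = card {k\<in>{1..t}. A k = a}"

definition Jcost :: "(nat \<Rightarrow> real) \<Rightarrow> nat \<Rightarrow> real" where
  "Jcost C t = (\<Sum>k=1..t. C k)"

definition emp_mean :: "(nat \<Rightarrow> nat) \<Rightarrow> (nat \<Rightarrow> real) \<Rightarrow> nat \<Rightarrow> nat \<Rightarrow> real" where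
  "emp_mean A Y a t = (\<Sum>k\<in>{k\<in>{1..t}. A k = a}. Y k) / real (Npulls A a t)"

definition what :: "(real \<Rightarrow> real \<Rightarrow> real) \<Rightarrow> nat \<Rightarrow> (nat \<Rightarrow> nat) \<Rightarrow> (nat \<Rightarrow> real) \<Rightarrow> (nat \<Rightarrow> real) \<Rightarrow> nat \<Rightarrow> nat \<Rightarrow> real" where
  "what d K A X C t = wstar d K (\<lambda>a. emp_mean A X a t) (\<lambda>a. emp_mean A C a t)"

definition ctas :: "(real \<Rightarrow> real \<Rightarrow> real) \<Rightarrow> nat \<Rightarrow> (nat \<Rightarrow> nat) \<Rightarrow> (nat \<Rightarrow> real) \<Rightarrow> (nat \<Rightarrow> real) \<Rightarrow> bool" where
  "ctas d K A X C \<longleftrightarrow>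
     (\<forall>k\<ge>1. A k < K) \<and>
     {A k | k. k \<in> {1..K}} = {..<K} \<and>
     (\<forall>t\<ge>K.
        (if {a. a < K \<and> real (Npulls A a t) < sqrt (real t)} \<noteq> {}
         then (\<forall>b<K. Npulls A (A (Suc t)) t \<le> Npulls A b t)
         else (\<forall>b<K. Jcost C t * what d K A X C t b - emp_mean A C b t * real (Npulls A b t)
                      \<le> Jcost C t * what d K A X C t (A (Suc t))
                         - emp_mean A C (A (Suc t)) t * real (Npulls A (A (Suc t)) t))))"

end

theory Submission imports Defs "HOL-Analysis.Analysis" begin

definition Ssum :: "(nat \<Rightarrow> nat) \<Rightarrow> (nat \<Rightarrow> real) \<Rightarrow> nat \<Rightarrow> nat \<Rightarrow> real" where
  "Ssum A C a t = (\<Sum>k\<in>{k\<in>{1..t}. A k = a}. C k)"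

lemma L1: "emp_mean A C a t * real (Npulls A a t) = Ssum A C a t"
proof (cases "Npulls A a t = 0")
  case True
  then have e: "{k\<in>{1..t}. A k = a} = {}" unfolding Npulls_def by simp
  show ?thesis unfolding Ssum_def emp_mean_def e by simp
next
  case False
  then show ?thesis by (simp add: Ssum_def emp_mean_def)
qed

lemma L2: assumes "\<forall>k\<ge>1. A k < K" shows "(\<Sum>a<K. Ssum A C a t) = Jcost C t"
  unfolding Ssum_def Jcost_def
  by (rule sum.group) (use assms in auto)

lemma L3: "Ssum A C a (Suc t) = Ssum A C a t + (if A (Suc t) = a then C (Suc t) else 0)"
proof -
  have e: "{k\<in>{1..Suc t}. A k = a} = {k\<in>{1..t}. A k = a} \<union> (if A (Suc t) = a then {Suc t} else {})"
    by (auto simp: le_Suc_eq)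
  show ?thesis unfolding Ssum_def e by (auto simp: sum.union_disjoint)
qed

lemma L4: "Jcost C (Suc t) = Jcost C t + C (Suc t)"
  unfolding Jcost_def by simp

lemma L5: assumes "\<forall>k\<ge>1. C k \<le> 1" shows "Ssum A C a t \<le> real (Npulls A a t)"
proof -
  have "Ssum A C a t \<le> (\<Sum>k\<in>{k\<in>{1..t}. A k = a}. 1)"
    unfolding Ssum_def by (rule sum_mono) (use assms in auto)
  then show ?thesis by (simp add: Npulls_def)
qed

lemma L5b: "Npulls A a t \<le> t"
proof -
  have "Npulls A a t \<le> card {1..t}" unfolding Npulls_def by (rule card_mono) auto
  then show ?thesis by simp
qed

lemma L6: assumes "\<forall>k\<ge>1. lmin \<le> C k" shows "lmin * real t \<le> Jcost C t"
proof -
  have "(\<Sum>k=1..t. lmin) \<le> Jcost C t" unfolding Jcost_def by (rule sum_mono) (use assms in auto)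
  then show ?thesis by (simp add: mult.commute)
qed

lemma L7: assumes "\<forall>k\<ge>1. 0 \<le> C k" shows "0 \<le> Ssum A C a t"
  unfolding Ssum_def by (rule sum_nonneg) (use assms in auto)

lemma L8: assumes "\<forall>k\<ge>1. 0 \<le> C k" shows "Jcost C t \<le> Jcost C (Suc t)"
  using assms by (simp add: L4)

lemma L9: "((\<lambda>t::nat. (T0 + 1 + sqrt (real t)) / real t) \<longlongrightarrow> 0) sequentially"
proof -
  have 1: "(\<lambda>t::nat. (T0 + 1) * inverse (real t)) \<longlonglongrightarrow> 0"
    by (rule tendsto_mult_right_zero[OF lim_inverse_n])
  have 2: "(\<lambda>t::nat. inverse (sqrt (real t))) \<longlonglongrightarrow> 0"
    by (rule tendsto_inverse_0_at_top[OF filterlim_compose[OF sqrt_at_top filterlim_real_sequentially]])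
  have 3: "(\<lambda>t::nat. (T0 + 1) * inverse (real t) + inverse (sqrt (real t))) \<longlonglongrightarrow> 0"
    using tendsto_add_zero[OF 1 2] .
  have 4: "\<forall>\<^sub>F t in sequentially. (T0 + 1) * inverse (real t) + inverse (sqrt (real t))
     = (T0 + 1 + sqrt (real t)) / real t"
  proof (rule eventually_sequentiallyI[of 1])
    fix t :: nat assume "1 \<le> t"
    then have tp: "real t > 0" by simp
    have "sqrt (real t) / real t = inverse (sqrt (real t))"
    proof -
      have sp: "sqrt (real t) > 0" using tp by simp
      show ?thesis using sp tp by (simp add: field_simps)
    qed
    then show "(T0 + 1) * inverse (real t) + inverse (sqrt (real t)) = (T0 + 1 + sqrt (real t)) / real t"
      by (simp add: add_divide_distrib divide_inverse distrib_right)
  qed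
  show ?thesis using Lim_transform_eventually[OF 3 4] .
qed

theorem lemma5:
  fixes d :: "real \<Rightarrow> real \<Rightarrow> real" and K :: nat and lmin :: real
    and \<mu> c :: "nat \<Rightarrow> real"
    and A :: "nat \<Rightarrow> nat" and X C :: "nat \<Rightarrow> real"
  assumes l_pos: "0 < lmin"
    and c_range: "\<forall>a<K. lmin \<le> c a \<and> c a \<le> 1"
    and unique_best: "\<exists>!a. is_best K \<mu> a"
    and wstar_exists: "\<exists>w. is_opt_alloc d K \<mu> c w"
    and what_exists: "\<forall>t\<ge>K. \<exists>w. is_opt_alloc d K (\<lambda>a. emp_mean A X a t) (\<lambda>a. emp_mean A C a t) w"
    and C_range: "\<forall>k\<ge>1. lmin \<le> C k \<and> C k \<le> 1"
    and rule: "ctas d K A X C"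
  shows "\<forall>\<epsilon>>0. \<forall>t0.
           (\<forall>t\<ge>t0. \<forall>a<K. \<bar>what d K A X C t a - wstar d K \<mu> c a\<bar> < \<epsilon>) \<longrightarrow>
           (\<exists>teps\<ge>t0. \<forall>t\<ge>teps. \<forall>a<K.
              \<bar>emp_mean A C a t * real (Npulls A a t) / Jcost C t - wstar d K \<mu> c a\<bar>
                \<le> 3 * (real K - 1) * \<epsilon>)"
proof (intro allI impI)
  fix \<epsilon> :: real and t0 :: nat
  assume eps: "\<epsilon> > 0"
  assume close: "\<forall>t\<ge>t0. \<forall>a<K. \<bar>what d K A X C t a - wstar d K \<mu> c a\<bar> < \<epsilon>"
  define w where "w = wstar d K \<mu> c"
  define S where "S = Ssum A C"
  define J where "J = Jcost C"
  define T0 where "T0 = max t0 K"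
  have Cnn: "\<forall>k\<ge>1. 0 \<le> C k" using C_range l_pos by force
  have C1: "\<forall>k\<ge>1. C k \<le> 1" using C_range by blast
  have Cl: "\<forall>k\<ge>1. lmin \<le> C k" using C_range by blast
  have Ak: "\<forall>k\<ge>1. A k < K" using conjunct1[OF rule[unfolded ctas_def]] .
  note rr = conjunct2[OF conjunct2[OF rule[unfolded ctas_def]]]
  have wopt: "is_opt_alloc d K \<mu> c w" unfolding w_def wstar_def using wstar_exists by (rule someI_ex)
  then have wsim: "w \<in> prob_simplex K" unfolding is_opt_alloc_def by blast
  then have wnn: "\<And>a. a < K \<Longrightarrow> 0 \<le> w a" and wsum: "(\<Sum>a<K. w a) = 1"
    unfolding prob_simplex_def by auto
  have whsim: "what d K A X C t \<in> prob_simplex K" if "t \<ge> K" for t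
  proof -
    have "is_opt_alloc d K (\<lambda>a. emp_mean A X a t) (\<lambda>a. emp_mean A C a t) (what d K A X C t)"
      unfolding what_def wstar_def using what_exists that someI_ex[of "is_opt_alloc d K (\<lambda>a. emp_mean A X a t) (\<lambda>a. emp_mean A C a t)"] by simp
    then show ?thesis unfolding is_opt_alloc_def by blast
  qed
  have Jmono: "J t \<le> J (Suc t)" for t unfolding J_def using L8[OF Cnn] .
  have Snn: "0 \<le> S a t" for a t unfolding S_def using L7[OF Cnn] .
  have SJ: "(\<Sum>a<K. S a t) = J t" for t unfolding S_def J_def using L2[OF Ak] .
  have Jl: "lmin * real t \<le> J t" for t unfolding J_def using L6[OF Cl] .
  have Jnn: "0 \<le> J t" for t
  proof -
    have "0 \<le> lmin * real t" using l_pos by simp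
    then show ?thesis using Jl[of t] by linarith
  qed
  have pulled: "S (A (Suc t)) t \<le> max (J t * (w (A (Suc t)) + \<epsilon>)) (sqrt (real t))"
    if "t \<ge> T0" for t
  proof -
    let ?a = "A (Suc t)"
    have tK: "t \<ge> K" and tt0: "t \<ge> t0" using that unfolding T0_def by auto
    have aK: "?a < K" using Ak by auto
    have r: "(if {a. a < K \<and> real (Npulls A a t) < sqrt (real t)} \<noteq> {}
         then (\<forall>b<K. Npulls A ?a t \<le> Npulls A b t)
         else (\<forall>b<K. Jcost C t * what d K A X C t b - emp_mean A C b t * real (Npulls A b t)
                      \<le> Jcost C t * what d K A X C t ?a
                         - emp_mean A C ?a t * real (Npulls A ?a t)))"
      using rr[rule_format, OF tK] .
    show ?thesis
    proof (cases "{a. a < K \<and> real (Npulls A a t) < sqrt (real t)} \<noteq> {}")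
      case True
      then obtain b where b: "b < K" "real (Npulls A b t) < sqrt (real t)" by auto
      with r True have "Npulls A ?a t \<le> Npulls A b t" by auto
      then have "S ?a t \<le> sqrt (real t)" using L5[OF C1, of A ?a t] b unfolding S_def
        by linarith
      then show ?thesis by simp
    next
      case False
      let ?wh = "what d K A X C t"
      have r2: "\<forall>b<K. Jcost C t * what d K A X C t b - emp_mean A C b t * real (Npulls A b t)
                      \<le> Jcost C t * what d K A X C t ?a
                         - emp_mean A C ?a t * real (Npulls A ?a t)"
        using r by (simp only: if_not_P[OF False])
      have ineq: "\<forall>b<K. J t * ?wh b - S b t \<le> J t * ?wh ?a - S ?a t"
        unfolding S_def J_def L1[symmetric] by (rule r2)
      have "(\<Sum>b<K. J t * ?wh b - S b t) \<le> (\<Sum>b<K. J t * ?wh ?a - S ?a t)"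
        by (rule sum_mono) (use ineq in auto)
      moreover have "(\<Sum>b<K. J t * ?wh b - S b t) = 0"
      proof -
        have "(\<Sum>b<K. ?wh b) = 1" using whsim[OF tK] unfolding prob_simplex_def by auto
        then show ?thesis by (simp add: sum_subtractf sum_distrib_left[symmetric] SJ)
      qed
      ultimately have "0 \<le> real K * (J t * ?wh ?a - S ?a t)" by simp
      moreover have "K > 0" using aK by simp
      ultimately have "S ?a t \<le> J t * ?wh ?a"
        by (simp add: zero_le_mult_iff)
      also have "\<dots> \<le> J t * (w ?a + \<epsilon>)"
      proof -
        have "\<bar>?wh ?a - w ?a\<bar> < \<epsilon>" using close tt0 aK unfolding w_def by blast
        then have "?wh ?a \<le> w ?a + \<epsilon>" by linarith
        moreover have "0 \<le> J t" by (rule Jnn)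
        ultimately show ?thesis by (simp add: mult_left_mono)
      qed
      finally show ?thesis by simp
    qed
  qed
  have bound: "S a t \<le> real T0 + J t * (w a + \<epsilon>) + 1 + sqrt (real t)"
    if aK: "a < K" and tT: "T0 \<le> t" for a t
    using tT
  proof (induction t rule: dec_induct)
    case base
    have "S a T0 \<le> real T0" using L5[OF C1, of A a T0] L5b[of A a T0] unfolding S_def by linarith
    moreover have "0 \<le> J T0 * (w a + \<epsilon>)"
      using Jnn[of T0] wnn[OF aK] eps by simp
    moreover have "0 \<le> sqrt (real T0)" by simp
    ultimately show ?case by linarith
  next
    case (step t)
    have Jp: "0 \<le> J t" by (rule Jnn)
    have wp: "0 \<le> w a + \<epsilon>" using wnn[OF aK] eps by simp
    have mono: "real T0 + J t * (w a + \<epsilon>) + 1 + sqrt (real t)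
          \<le> real T0 + J (Suc t) * (w a + \<epsilon>) + 1 + sqrt (real (Suc t))"
    proof -
      have "sqrt (real t) \<le> sqrt (real (Suc t))" by simp
      moreover have "J t * (w a + \<epsilon>) \<le> J (Suc t) * (w a + \<epsilon>)" by (rule mult_right_mono[OF Jmono[of t] wp])
      ultimately show ?thesis by linarith
    qed
    show ?case
    proof (cases "A (Suc t) = a")
      case True
      have "S a (Suc t) \<le> S a t + 1" using L3[of A C a t] C1 True unfolding S_def by auto
      also have "\<dots> \<le> max (J t * (w a + \<epsilon>)) (sqrt (real t)) + 1"
        using pulled[OF step(1)] True by simp
      also have "\<dots> \<le> real T0 + J t * (w a + \<epsilon>) + 1 + sqrt (real t)"
        proof -
        have "0 \<le> J t * (w a + \<epsilon>)" using Jp wp by simp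
        moreover have "0 \<le> sqrt (real t)" by simp
        moreover have "0 \<le> real T0" by simp
        ultimately show ?thesis by linarith
      qed
      finally show ?thesis using mono by linarith
    next
      case False
      then have "S a (Suc t) = S a t" using L3[of A C a t] unfolding S_def by simp
      then show ?thesis using step(3) mono by linarith
    qed
  qed
  have lmpos: "0 < \<epsilon> * lmin" using eps l_pos by simp
  from order_tendstoD(2)[OF L9[of "real T0"] lmpos]
  obtain N where N: "\<And>t. t \<ge> N \<Longrightarrow> (real T0 + 1 + sqrt (real t)) / real t < \<epsilon> * lmin"
    unfolding eventually_sequentially by blast
  define teps where "teps = max (max N T0) (max t0 1)"
  show "\<exists>teps\<ge>t0. \<forall>t\<ge>teps. \<forall>a<K.
              \<bar>emp_mean A C a t * real (Npulls A a t) / Jcost C t - wstar d K \<mu> c a\<bar>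
                \<le> 3 * (real K - 1) * \<epsilon>"
  proof (intro exI[of _ teps] conjI allI impI)
    show "t0 \<le> teps" unfolding teps_def by simp
    fix t a assume tt: "teps \<le> t" and aK: "a < K"
    have t1: "t \<ge> 1" and tN: "t \<ge> N" and tT: "t \<ge> T0" using tt unfolding teps_def by auto
    have tpos: "real t > 0" using t1 by simp
    have Jpos: "J t > 0"
    proof -
      have "0 < lmin * real t" using l_pos tpos by simp
      then show ?thesis using Jl[of t] by linarith
    qed
    have small: "real T0 + 1 + sqrt (real t) \<le> \<epsilon> * J t"
    proof -
      have "real T0 + 1 + sqrt (real t) < \<epsilon> * lmin * real t"
        using N[OF tN] tpos by (simp add: divide_less_eq)
      also have "\<dots> \<le> \<epsilon> * J t" using Jl[of t] eps by (simp add: mult.assoc)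
      finally show ?thesis by simp
    qed
    define r where "r b = S b t / J t" for b
    have up: "r b \<le> w b + 2 * \<epsilon>" if "b < K" for b
    proof -
      have "S b t \<le> J t * (w b + \<epsilon>) + \<epsilon> * J t" using bound[OF that tT] small by linarith
      also have "\<dots> = J t * (w b + 2 * \<epsilon>)" by (simp add: algebra_simps)
      finally show ?thesis unfolding r_def using Jpos by (simp add: divide_le_eq mult.commute)
    qed
    have rsum: "(\<Sum>b<K. r b) = 1" unfolding r_def using SJ[of t] Jpos
      by (simp add: sum_divide_distrib[symmetric])
    have split: "r a - w a = - (\<Sum>b\<in>{..<K}-{a}. r b - w b)"
    proof -
      have "(\<Sum>b<K. r b - w b) = 0" using rsum wsum by (simp add: sum_subtractf)
      moreover have "(\<Sum>b<K. r b - w b) = (r a - w a) + (\<Sum>b\<in>{..<K}-{a}. r b - w b)"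
        using aK by (simp add: sum.remove)
      ultimately show ?thesis by linarith
    qed
    have cardK: "card ({..<K}-{a}) = K - 1" using aK by simp
    have "(\<Sum>b\<in>{..<K}-{a}. r b - w b) \<le> (\<Sum>b\<in>{..<K}-{a}. 2 * \<epsilon>)"
    proof (rule sum_mono)
      fix b assume "b \<in> {..<K}-{a}"
      then have "r b \<le> w b + 2 * \<epsilon>" using up by simp
      then show "r b - w b \<le> 2 * \<epsilon>" by linarith
    qed
    also have "\<dots> = (real K - 1) * (2 * \<epsilon>)" using cardK aK by (simp add: of_nat_diff)
    finally have low: "r a - w a \<ge> - ((real K - 1) * (2 * \<epsilon>))" using split by linarith
    have hi: "r a - w a \<le> 3 * (real K - 1) * \<epsilon>"
    proof (cases "K = 1")
      case True
      then have "{..<K}-{a} = {}" using aK by auto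
      then have "(\<Sum>b\<in>{..<K}-{a}. r b - w b) = 0" by (simp only: sum.empty)
      then show ?thesis using split True by simp
    next
      case False
      then have "K \<ge> 2" using aK by linarith
      then have "real K \<ge> 2" by simp
      then have "3 * (real K - 1) \<ge> 2" by (simp add: algebra_simps)
      then have "2 * \<epsilon> \<le> 3 * (real K - 1) * \<epsilon>" using mult_right_mono[of 2 "3 * (real K - 1)" \<epsilon>] eps by simp
      then show ?thesis using up[OF aK] by linarith
    qed
    have Kge: "real K \<ge> 1" using aK by linarith
    have "\<bar>r a - w a\<bar> \<le> 3 * (real K - 1) * \<epsilon>"
    proof -
      have "0 \<le> (real K - 1) * \<epsilon>" using Kge eps by simp
      moreover have "(real K - 1) * (2 * \<epsilon>) = 2 * ((real K - 1) * \<epsilon>)" by simp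
      moreover have "3 * (real K - 1) * \<epsilon> = 3 * ((real K - 1) * \<epsilon>)" by simp
      ultimately show ?thesis using low hi by linarith
    qed
    moreover have "emp_mean A C a t * real (Npulls A a t) / Jcost C t = r a"
      unfolding r_def S_def J_def L1 ..
    ultimately show "\<bar>emp_mean A C a t * real (Npulls A a t) / Jcost C t - wstar d K \<mu> c a\<bar>
                \<le> 3 * (real K - 1) * \<epsilon>" unfolding w_def by simp
  qed
qed

end
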